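(* Let $G$ be a directed clique on $[n]$ and $W$ any (nondegenerate) CTLN $W(G,\varepsilon,\delta)$ with legal parameters. Then $\operatorname{FP}(W)=\{\sigma\}$, where $\sigma$ is the unique target-free clique of $G$. In particular, a directed clique is a stable motif if and only if it is a clique.
   Context: $G$ is a simple directed graph. $G$ is a directed clique if its nodes can be ordered $1,\dots,n$ so that $i\to j$ whenever $i<j$ (no constraint on back edges). A clique is a set of nodes pairwise bidirectionally connected; a target of $\sigma$ is $k\notin\sigma$ with $i\to k$ for all $i\in\sigma$; target-free means no target. Legal parameters: $\delta>0$, $0<\varepsilon<\frac{\delta}{\delta+1}$. $W(G,\varepsilon,\delta)$ has $W_{ii}=0$, $W_{ij}=-1+\varepsilon$ if $j\to i$, $W_{ij}=-1-\delta$ if $i\ne j$, $j\not\to i$; dynamics $\dot x_i=-x_i+[\sum_jW_{ij}x_j+\theta]_+$, $\theta>0$; nondegenerate means $\det(I-W_\sigma)\ne0$ and all Cramer determinants for $(I-W_\sigma)x=\theta 1_\sigma$ nonzero. $\operatorname{FP}(W)$ is the set of supports $\{i:x^*_i>0\}$ of fixed points $x^*\in\mathbb R^n_{\ge0}$. $G$ is a stable motif if $[n]\in\operatorname{FP}(W)$ and all eigenvalues of $I-W$ have positive real part. *)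

theory Defs
  imports "HOL-Analysis.Analysis"
begin

text \<open>Graphs on the vertex set [n] = {0..<n}; E i j means the edge i -> j.\<close>

definition simple_digraph :: "nat \<Rightarrow> (nat \<Rightarrow> nat \<Rightarrow> bool) \<Rightarrow> bool" where
  "simple_digraph n E \<longleftrightarrow> (\<forall>i<n. \<not> E i i)"

definition directed_clique :: "nat \<Rightarrow> (nat \<Rightarrow> nat \<Rightarrow> bool) \<Rightarrow> bool" where
  "directed_clique n E \<longleftrightarrow>
     (\<exists>p. bij_betw p {0..<n} {0..<n} \<and> (\<forall>i<n. \<forall>j<n. i < j \<longrightarrow> E (p i) (p j)))"

definition is_clique :: "(nat \<Rightarrow> nat \<Rightarrow> bool) \<Rightarrow> nat set \<Rightarrow> bool" where
  "is_clique E \<sigma> \<longleftrightarrow> (\<forall>i\<in>\<sigma>. \<forall>j\<in>\<sigma>. i \<noteq> j \<longrightarrow> E i j \<and> E j i)"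

definition is_target :: "(nat \<Rightarrow> nat \<Rightarrow> bool) \<Rightarrow> nat set \<Rightarrow> nat \<Rightarrow> bool" where
  "is_target E \<sigma> k \<longleftrightarrow> k \<notin> \<sigma> \<and> (\<forall>i\<in>\<sigma>. E i k)"

definition target_free :: "nat \<Rightarrow> (nat \<Rightarrow> nat \<Rightarrow> bool) \<Rightarrow> nat set \<Rightarrow> bool" where
  "target_free n E \<sigma> \<longleftrightarrow> \<not> (\<exists>k<n. is_target E \<sigma> k)"

definition legal_params :: "real \<Rightarrow> real \<Rightarrow> bool" where
  "legal_params \<epsilon> \<delta> \<longleftrightarrow> \<delta> > 0 \<and> 0 < \<epsilon> \<and> \<epsilon> < \<delta> / (\<delta> + 1)"

definition ctln_W :: "(nat \<Rightarrow> nat \<Rightarrow> bool) \<Rightarrow> real \<Rightarrow> real \<Rightarrow> nat \<Rightarrow> nat \<Rightarrow> real" where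
  "ctln_W E \<epsilon> \<delta> i j = (if i = j then 0 else if E j i then -1 + \<epsilon> else -1 - \<delta>)"

definition det_on :: "nat set \<Rightarrow> (nat \<Rightarrow> nat \<Rightarrow> real) \<Rightarrow> real" where
  "det_on S A = (\<Sum>p | p permutes S. of_int (sign p) * (\<Prod>i\<in>S. A i (p i)))"

definition I_minus :: "(nat \<Rightarrow> nat \<Rightarrow> real) \<Rightarrow> nat \<Rightarrow> nat \<Rightarrow> real" where
  "I_minus W i j = (if i = j then 1 else 0) - W i j"

text \<open>Cramer matrix: column k of (I - W_sigma) replaced by theta * 1_sigma.\<close>
definition cramer_mat :: "(nat \<Rightarrow> nat \<Rightarrow> real) \<Rightarrow> real \<Rightarrow> nat \<Rightarrow> nat \<Rightarrow> nat \<Rightarrow> real" where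
  "cramer_mat W \<theta> k i j = (if j = k then \<theta> else I_minus W i j)"

definition nondegenerate :: "nat \<Rightarrow> (nat \<Rightarrow> nat \<Rightarrow> real) \<Rightarrow> real \<Rightarrow> bool" where
  "nondegenerate n W \<theta> \<longleftrightarrow>
     (\<forall>\<sigma>. \<sigma> \<subseteq> {0..<n} \<and> \<sigma> \<noteq> {} \<longrightarrow>
        det_on \<sigma> (I_minus W) \<noteq> 0 \<and> (\<forall>k\<in>\<sigma>. det_on \<sigma> (cramer_mat W \<theta> k) \<noteq> 0))"

text \<open>Fixed points of  dx_i/dt = -x_i + [sum_j W_ij x_j + theta]_+  in R^n_{>=0}.\<close>
definition is_fixed_point :: "nat \<Rightarrow> (nat \<Rightarrow> nat \<Rightarrow> real) \<Rightarrow> real \<Rightarrow> (nat \<Rightarrow> real) \<Rightarrow> bool" where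
  "is_fixed_point n W \<theta> x \<longleftrightarrow>
     (\<forall>i<n. x i \<ge> 0) \<and> (\<forall>i<n. x i = max 0 ((\<Sum>j<n. W i j * x j) + \<theta>))"

definition FP :: "nat \<Rightarrow> (nat \<Rightarrow> nat \<Rightarrow> real) \<Rightarrow> real \<Rightarrow> nat set set" where
  "FP n W \<theta> = {\<sigma>. \<exists>x. is_fixed_point n W \<theta> x \<and> \<sigma> = {i. i < n \<and> x i > 0}}"

definition eigenvalue_of :: "nat \<Rightarrow> (nat \<Rightarrow> nat \<Rightarrow> real) \<Rightarrow> complex \<Rightarrow> bool" where
  "eigenvalue_of n A \<mu> \<longleftrightarrow>
     (\<exists>v :: nat \<Rightarrow> complex. (\<exists>i<n. v i \<noteq> 0) \<and>
        (\<forall>i<n. (\<Sum>j<n. complex_of_real (A i j) * v j) = \<mu> * v i))"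

definition stable_motif :: "nat \<Rightarrow> (nat \<Rightarrow> nat \<Rightarrow> real) \<Rightarrow> real \<Rightarrow> bool" where
  "stable_motif n W \<theta> \<longleftrightarrow>
     {0..<n} \<in> FP n W \<theta> \<and> (\<forall>\<mu>. eigenvalue_of n (I_minus W) \<mu> \<longrightarrow> Re \<mu> > 0)"

end

theory Submission
  imports Defs
begin


lemma unique_one_sided:
  fixes pos :: "nat \<Rightarrow> nat"
  assumes sub1: "t1 \<subseteq> {0..<n}" and cl1: "is_clique E t1" and tf2: "target_free n E t2"
    and inj: "inj_on pos {0..<n}" and fwd: "\<forall>u<n. \<forall>v<n. pos u < pos v \<longrightarrow> E u v"
    and k1: "k \<in> t1" and k2: "k \<notin> t2" and sub2: "t2 \<subseteq> {0..<n}"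
    and up: "\<forall>i\<in>t2. pos i > pos k \<longrightarrow> i \<in> t1"
  shows False
proof -
  have kn: "k < n" using sub1 k1 by auto
  from tf2 kn have "\<not> is_target E t2 k" unfolding target_free_def by blast
  with k2 obtain i where i: "i \<in> t2" "\<not> E i k" unfolding is_target_def by blast
  have ik: "i \<noteq> k" using i k2 by auto
  have iN: "i < n" using i sub2 by auto
  have "pos i \<noteq> pos k" using inj ik iN kn by (auto dest: inj_onD)
  moreover have "\<not> pos i < pos k" using fwd iN kn i by blast
  ultimately have "pos i > pos k" by auto
  then have "i \<in> t1" using up i by blast
  then show False using cl1 k1 ik i unfolding is_clique_def by blast
qed

lemma unique_tfc:
  fixes pos :: "nat \<Rightarrow> nat"
  assumes sub1: "t1 \<subseteq> {0..<n}" and cl1: "is_clique E t1" and tf1: "target_free n E t1"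
    and sub2: "t2 \<subseteq> {0..<n}" and cl2: "is_clique E t2" and tf2: "target_free n E t2"
    and inj: "inj_on pos {0..<n}" and fwd: "\<forall>u<n. \<forall>v<n. pos u < pos v \<longrightarrow> E u v"
  shows "t1 = t2"
proof (rule ccontr)
  assume ne: "t1 \<noteq> t2"
  define D where "D = (t1 - t2) \<union> (t2 - t1)"
  have "D \<noteq> {}" using ne unfolding D_def by blast
  then obtain d where d: "d \<in> D" by blast
  have Dn: "D \<subseteq> {0..<n}" using sub1 sub2 unfolding D_def by blast
  have "\<exists>k. k \<in> D \<and> (\<forall>y. y \<in> D \<longrightarrow> pos y \<le> pos k)"
    apply (rule Lattices_Big.ex_has_greatest_nat[where k=d and b="Suc (Max (pos ` {0..<n}))"])
    using d apply simp
    using Dn by (auto simp: le_imp_less_Suc)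
  then obtain k where k: "k \<in> D" "\<forall>y. y \<in> D \<longrightarrow> pos y \<le> pos k" by blast
  show False
  proof (cases "k \<in> t1")
    case True
    then have "k \<notin> t2" using k unfolding D_def by blast
    moreover have "\<forall>i\<in>t2. pos i > pos k \<longrightarrow> i \<in> t1" using k unfolding D_def by force
    ultimately show False using unique_one_sided[OF sub1 cl1 tf2 inj fwd True _ sub2] by blast
  next
    case False
    then have "k \<in> t2" using k unfolding D_def by blast
    moreover have "\<forall>i\<in>t1. pos i > pos k \<longrightarrow> i \<in> t2" using k unfolding D_def by force
    ultimately show False using unique_one_sided[OF sub2 cl2 tf1 inj fwd _ False sub1] by blast
  qed
qed

lemma pow2_sum_less: "(\<Sum>i<m. (2::nat)^i) < 2^m"
  by (induction m) auto

lemma exists_tfc: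
  fixes pos :: "nat \<Rightarrow> nat"
  assumes inj: "inj_on pos {0..<n}" and fwd: "\<forall>u<n. \<forall>v<n. pos u < pos v \<longrightarrow> E u v"
  shows "\<exists>s. s \<subseteq> {0..<n} \<and> is_clique E s \<and> target_free n E s"
proof -
  define w where "w t = (\<Sum>i\<in>t. (2::nat) ^ pos i)" for t
  define P where "P t = (t \<subseteq> {0..<n} \<and> is_clique E t)" for t
  have "\<exists>s. P s \<and> (\<forall>y. P y \<longrightarrow> w y \<le> w s)"
  proof (rule Lattices_Big.ex_has_greatest_nat[where k="{}" and b="Suc (w {0..<n})"])
    show "P {}" unfolding P_def is_clique_def by auto
    show "\<forall>y. P y \<longrightarrow> w y < Suc (w {0..<n})"
      unfolding P_def w_def
    proof (intro allI impI)
      fix y :: "nat set" assume "y \<subseteq> {0..<n} \<and> is_clique E y"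
      then have "(\<Sum>i\<in>y. (2::nat) ^ pos i) \<le> (\<Sum>i\<in>{0..<n}. 2 ^ pos i)"
        by (intro sum_mono2) auto
      then show "(\<Sum>i\<in>y. (2::nat) ^ pos i) < Suc (\<Sum>i\<in>{0..<n}. 2 ^ pos i)" by simp
    qed
  qed
  then obtain s where s: "P s" "\<forall>y. P y \<longrightarrow> w y \<le> w s" by blast
  have sn: "s \<subseteq> {0..<n}" and scl: "is_clique E s" using s(1) unfolding P_def by auto
  have "target_free n E s"
    unfolding target_free_def
  proof
    assume "\<exists>k<n. is_target E s k"
    then obtain k where kn: "k < n" and kt: "is_target E s k" by blast
    have ks: "k \<notin> s" and ek: "\<forall>i\<in>s. E i k" using kt unfolding is_target_def by auto
    define hi where "hi = {i\<in>s. pos i > pos k}"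
    define lo where "lo = {i\<in>s. pos i < pos k}"
    have fin: "finite s" using sn finite_subset by blast
    have split: "s = hi \<union> lo"
    proof -
      have "\<forall>i\<in>s. pos i \<noteq> pos k" using inj sn kn ks by (metis atLeastLessThan_iff inj_on_def subsetD zero_le)
      then show ?thesis unfolding hi_def lo_def by force
    qed
    have disj: "hi \<inter> lo = {}" unfolding hi_def lo_def by auto
    have ws: "w s = w hi + w lo"
      unfolding w_def using split disj fin
      by (metis finite_Un sum.union_disjoint)
    have wlo: "w lo < 2 ^ pos k"
    proof -
      have injlo: "inj_on pos lo" using inj sn unfolding lo_def by (auto intro: inj_on_subset)
      have "w lo = (\<Sum>m\<in>pos ` lo. (2::nat) ^ m)" unfolding w_def using sum.reindex[OF injlo, of "\<lambda>m. (2::nat) ^ m"] by (simp add: comp_def)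
      also have "\<dots> \<le> (\<Sum>m<pos k. (2::nat) ^ m)"
        by (rule sum_mono2) (auto simp: lo_def)
      also have "\<dots> < 2 ^ pos k" by (rule pow2_sum_less)
      finally show ?thesis .
    qed
    define t where "t = insert k hi"
    have khi: "k \<notin> hi" using ks unfolding hi_def by auto
    have wt: "w t = 2 ^ pos k + w hi"
      unfolding t_def w_def using khi fin unfolding hi_def by simp
    have Pt: "P t"
      unfolding P_def t_def
    proof (rule conjI)
      show "insert k hi \<subseteq> {0..<n}" using kn sn unfolding hi_def by auto
    next
      show "is_clique E (insert k hi)" unfolding is_clique_def
    proof (intro ballI impI)
      fix i j assume i: "i \<in> insert k hi" and j: "j \<in> insert k hi" and ij: "i \<noteq> j"
      show "E i j \<and> E j i"
      proof (cases "i = k")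
        case True
        then have "j \<in> hi" using j ij by auto
        then show ?thesis using True ek fwd kn sn unfolding hi_def by auto
      next
        case False
        then have ihi: "i \<in> hi" using i by auto
        show ?thesis
        proof (cases "j = k")
          case True
          then show ?thesis using ihi ek fwd kn sn unfolding hi_def by auto
        next
          case False
          then have "j \<in> hi" using j by auto
          then show ?thesis using ihi ij scl unfolding hi_def is_clique_def by auto
        qed
      qed
    qed
    qed
    have "w t \<le> w s" using s(2) Pt by blast
    then show False using wt ws wlo by linarith
  qed
  then show ?thesis using sn scl by blast
qed



lemma W_le: "\<epsilon> > 0 \<Longrightarrow> \<delta> > 0 \<Longrightarrow> i \<noteq> j \<Longrightarrow> ctln_W E \<epsilon> \<delta> i j \<le> -1 + \<epsilon>"
  unfolding ctln_W_def by auto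

lemma fp_target_free:
  assumes fp: "is_fixed_point n (ctln_W E \<epsilon> \<delta>) \<theta> x"
    and ep: "\<epsilon> > 0" "\<epsilon> < 1" and dp: "\<delta> > 0" and tp: "\<theta> > 0"
  shows "target_free n E {i. i < n \<and> x i > 0}"
  unfolding target_free_def
proof
  let ?W = "ctln_W E \<epsilon> \<delta>"
  assume "\<exists>k<n. is_target E {i. i < n \<and> x i > 0} k"
  then obtain k where kn: "k < n" and kt: "is_target E {i. i < n \<and> x i > 0} k" by blast
  have xnn: "\<forall>i<n. x i \<ge> 0" and xeq: "\<forall>i<n. x i = max 0 ((\<Sum>j<n. ?W i j * x j) + \<theta>)"
    using fp unfolding is_fixed_point_def by blast+
  have xk: "\<not> x k > 0" using kt kn unfolding is_target_def by auto
  have edges: "\<forall>j<n. x j > 0 \<longrightarrow> E j k" using kt unfolding is_target_def by auto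
  define S where "S = (\<Sum>j<n. x j)"
  have "(\<Sum>j<n. ?W k j * x j) = (\<Sum>j<n. (-1 + \<epsilon>) * x j)"
  proof (rule sum.cong)
    fix j assume "j \<in> {..<n}"
    then have jn: "j < n" by simp
    show "?W k j * x j = (-1 + \<epsilon>) * x j"
    proof (cases "x j > 0")
      case True
      then have "j \<noteq> k" using xk by auto
      then show ?thesis using edges True jn unfolding ctln_W_def by auto
    next
      case False
      then have "x j = 0" using xnn jn by force
      then show ?thesis by simp
    qed
  qed simp
  then have yk: "(\<Sum>j<n. ?W k j * x j) = (-1 + \<epsilon>) * S" unfolding S_def by (simp add: sum_distrib_left)
  have "(\<Sum>j<n. ?W k j * x j) + \<theta> \<le> 0"
  proof -
    have e: "x k = max 0 ((\<Sum>j<n. ?W k j * x j) + \<theta>)" using xeq kn by blast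
    show ?thesis using xk e unfolding max_def by (auto split: if_splits)
  qed
  then have th1: "(1 - \<epsilon>) * S \<ge> \<theta>" using yk by (simp add: algebra_simps)
  have "S > 0" proof (rule ccontr)
    assume "\<not> S > 0"
    then have "(1 - \<epsilon>) * S \<le> 0" using ep by (simp add: mult_nonneg_nonpos)
    then show False using tp th1 by linarith
  qed
  then obtain j where jn: "j < n" and xj: "x j > 0" unfolding S_def
  proof -
    have "\<not> (\<forall>j<n. x j \<le> 0)"
    proof
      assume "\<forall>j<n. x j \<le> 0"
      then have "S \<le> 0" unfolding S_def by (intro sum_nonpos) auto
      then show False using \<open>S > 0\<close> by simp
    qed
    then show ?thesis using that by force
  qed
  have "x j = (\<Sum>i<n. ?W j i * x i) + \<theta>"
  proof -
    have e: "x j = max 0 ((\<Sum>i<n. ?W j i * x i) + \<theta>)" using xeq jn by blast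
    show ?thesis using xj e unfolding max_def by (auto split: if_splits)
  qed
  moreover have "(\<Sum>i<n. ?W j i * x i) \<le> (\<Sum>i<n. (-1 + \<epsilon>) * x i + (if i = j then (1 - \<epsilon>) * x i else 0))"
  proof (rule sum_mono)
    fix i assume "i \<in> {..<n}"
    then have "x i \<ge> 0" using xnn by simp
    then show "?W j i * x i \<le> (-1 + \<epsilon>) * x i + (if i = j then (1 - \<epsilon>) * x i else 0)"
    proof (cases "i = j")
      case True
      then show ?thesis unfolding ctln_W_def by (simp add: algebra_simps)
    next
      case False
      then have "?W j i * x i \<le> (-1 + \<epsilon>) * x i"
        using W_le[OF ep(1) dp, of j i E] \<open>x i \<ge> 0\<close> by (intro mult_right_mono) auto
      then show ?thesis using False by simp
    qed
  qed
  moreover have "(\<Sum>i<n. (-1 + \<epsilon>) * x i + (if i = j then (1 - \<epsilon>) * x i else 0)) = (-1 + \<epsilon>) * S + (1 - \<epsilon>) * x j"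
    unfolding S_def using jn by (simp add: sum.distrib sum_distrib_left)
  ultimately have "\<epsilon> * x j \<le> (-1 + \<epsilon>) * S + \<theta>" by (simp add: algebra_simps)
  moreover have "\<epsilon> * x j > 0" using ep xj by simp
  ultimately show False using \<open>(\<Sum>j<n. ?W k j * x j) + \<theta> \<le> 0\<close> yk by linarith
qed



lemma domination_false:
  assumes fp: "is_fixed_point n (ctln_W E \<epsilon> \<delta>) \<theta> x"
    and ep: "\<epsilon> > 0" and dp: "\<delta> > 0"
    and jn: "j < n" and kn: "k < n" and xj: "x j > 0" and xk: "x k > 0"
    and jk: "j \<noteq> k" and ejk: "E j k" and nekj: "\<not> E k j"
    and dom: "\<forall>i<n. i \<noteq> j \<and> i \<noteq> k \<and> x i > 0 \<and> E i j \<longrightarrow> E i k"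
  shows False
proof -
  let ?W = "ctln_W E \<epsilon> \<delta>"
  have xnn: "\<forall>i<n. x i \<ge> 0" and xeq: "\<forall>i<n. x i = max 0 ((\<Sum>j<n. ?W i j * x j) + \<theta>)"
    using fp unfolding is_fixed_point_def by blast+
  have exj: "x j = (\<Sum>i<n. ?W j i * x i) + \<theta>"
  proof -
    have e: "x j = max 0 ((\<Sum>i<n. ?W j i * x i) + \<theta>)" using xeq jn by blast
    show ?thesis using xj e unfolding max_def by (auto split: if_splits)
  qed
  have exk: "x k = (\<Sum>i<n. ?W k i * x i) + \<theta>"
  proof -
    have e: "x k = max 0 ((\<Sum>i<n. ?W k i * x i) + \<theta>)" using xeq kn by blast
    show ?thesis using xk e unfolding max_def by (auto split: if_splits)
  qed
  have "(\<Sum>i<n. ?W j i * x i + (if i = j then (-1 + \<epsilon>) * x i else 0) + (if i = k then (1 + \<delta>) * x i else 0))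
        \<le> (\<Sum>i<n. ?W k i * x i)"
  proof (rule sum_mono)
    fix i assume "i \<in> {..<n}"
    then have iN: "i < n" by simp
    show "?W j i * x i + (if i = j then (-1 + \<epsilon>) * x i else 0) + (if i = k then (1 + \<delta>) * x i else 0) \<le> ?W k i * x i"
    proof (cases "i = j")
      case True
      then show ?thesis using jk ejk unfolding ctln_W_def by simp
    next
      case ij: False
      show ?thesis
      proof (cases "i = k")
        case True
        then show ?thesis using jk nekj unfolding ctln_W_def by (simp add: algebra_simps)
      next
        case ik: False
        show ?thesis
        proof (cases "x i > 0")
          case False
          then have "x i = 0" using xnn iN by force
          then show ?thesis using ij ik by simp
        next
          case True
          have "?W j i \<le> ?W k i" using dom iN ij ik True ep dp unfolding ctln_W_def by auto
          then show ?thesis using ij ik True by (simp add: mult_right_mono)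
        qed
      qed
    qed
  qed
  moreover have "(\<Sum>i<n. ?W j i * x i + (if i = j then (-1 + \<epsilon>) * x i else 0) + (if i = k then (1 + \<delta>) * x i else 0))
      = (\<Sum>i<n. ?W j i * x i) + (-1 + \<epsilon>) * x j + (1 + \<delta>) * x k"
    using jn kn by (simp add: sum.distrib)
  ultimately have "(\<Sum>i<n. ?W j i * x i) + (-1 + \<epsilon>) * x j + (1 + \<delta>) * x k \<le> (\<Sum>i<n. ?W k i * x i)"
    by linarith
  then have "\<epsilon> * x j + \<delta> * x k \<le> 0" using exj exk by (simp add: algebra_simps)
  moreover have "\<epsilon> * x j > 0" "\<delta> * x k > 0" using ep dp xj xk by auto
  ultimately show False by linarith
qed

lemma fp_clique:
  fixes pos :: "nat \<Rightarrow> nat"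
  assumes fp: "is_fixed_point n (ctln_W E \<epsilon> \<delta>) \<theta> x"
    and ep: "\<epsilon> > 0" and dp: "\<delta> > 0"
    and inj: "inj_on pos {0..<n}" and fwd: "\<forall>u<n. \<forall>v<n. pos u < pos v \<longrightarrow> E u v"
  shows "is_clique E {i. i < n \<and> x i > 0}"
proof (rule ccontr)
  let ?t = "{i. i < n \<and> x i > 0}"
  assume nc: "\<not> is_clique E ?t"
  define Bad where "Bad = {(j,k). j \<in> ?t \<and> k \<in> ?t \<and> pos j < pos k \<and> \<not> E k j}"
  obtain a b where ab: "a \<in> ?t" "b \<in> ?t" "a \<noteq> b" "\<not> (E a b \<and> E b a)"
    using nc unfolding is_clique_def by blast
  have "pos a \<noteq> pos b" using inj ab by (auto dest: inj_onD)
  then have "(a,b) \<in> Bad \<or> (b,a) \<in> Bad"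
    using ab fwd unfolding Bad_def by (cases "pos a < pos b") auto
  then obtain p0 where p0: "p0 \<in> Bad" by blast
  have "\<exists>q. q \<in> Bad \<and> (\<forall>y. y \<in> Bad \<longrightarrow> pos (snd y) \<le> pos (snd q))"
    apply (rule Lattices_Big.ex_has_greatest_nat[where k=p0 and b="Suc (Max (pos ` {0..<n}))"])
    using p0 apply simp
    unfolding Bad_def by (auto simp: le_imp_less_Suc)
  then obtain j k where q: "(j,k) \<in> Bad" and qmax: "\<forall>y. y \<in> Bad \<longrightarrow> pos (snd y) \<le> pos k"
    by force
  have jt: "j < n" "x j > 0" and kt: "k < n" "x k > 0" and pjk: "pos j < pos k" and nekj: "\<not> E k j"
    using q unfolding Bad_def by auto
  have jk: "j \<noteq> k" using pjk by auto
  have ejk: "E j k" using fwd jt kt pjk by blast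
  have dom: "\<forall>i<n. i \<noteq> j \<and> i \<noteq> k \<and> x i > 0 \<and> E i j \<longrightarrow> E i k"
  proof (intro allI impI)
    fix i assume iN: "i < n" and h: "i \<noteq> j \<and> i \<noteq> k \<and> x i > 0 \<and> E i j"
    have "pos i \<noteq> pos k" using inj iN kt h by (auto dest: inj_onD)
    then consider "pos i < pos k" | "pos i > pos k" by linarith
    then show "E i k"
    proof cases
      case 1 then show ?thesis using fwd iN kt by blast
    next
      case 2
      show ?thesis
      proof (rule ccontr)
        assume "\<not> E i k"
        then have "(k,i) \<in> Bad" unfolding Bad_def using kt iN h 2 by auto
        then have "pos i \<le> pos k" using qmax by force
        then show False using 2 by simp
      qed
    qed
  qed
  show False using domination_false[OF fp ep dp jt(1) kt(1) jt(2) kt(2) jk ejk nekj dom] .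
qed



lemma fp_exists:
  assumes sn: "s \<subseteq> {0..<n}" and cl: "is_clique E s" and tf: "target_free n E s"
    and ep: "\<epsilon> > 0" "\<epsilon> < 1" and dp: "\<delta> > 0" and tp: "\<theta> > 0"
  shows "\<exists>x. is_fixed_point n (ctln_W E \<epsilon> \<delta>) \<theta> x \<and> s = {i. i < n \<and> x i > 0}"
proof -
  let ?W = "ctln_W E \<epsilon> \<delta>"
  define D where "D = \<epsilon> + real (card s) * (1 - \<epsilon>)"
  have Dp: "D > 0" unfolding D_def using ep by (simp add: add_pos_nonneg)
  define c where "c = \<theta> / D"
  have cp: "c > 0" unfolding c_def using Dp tp by simp
  have cD: "c * D = \<theta>" unfolding c_def using Dp by simp
  define x where "x i = (if i \<in> s then c else 0)" for i
  have fin: "finite s" using sn finite_subset by blast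
  have sumeq: "(\<Sum>j<n. ?W i j * x j) = (\<Sum>j\<in>s. ?W i j * c)" for i
  proof -
    have "(\<Sum>j<n. ?W i j * x j) = (\<Sum>j\<in>{..<n}. if j \<in> s then ?W i j * c else 0)"
      unfolding x_def by (intro sum.cong) auto
    also have "\<dots> = (\<Sum>j\<in>{..<n} \<inter> s. ?W i j * c)"
      by (simp add: sum.inter_restrict)
    also have "{..<n} \<inter> s = s" using sn by auto
    finally show ?thesis .
  qed
  have fpx: "x i = max 0 ((\<Sum>j<n. ?W i j * x j) + \<theta>)" if iN: "i < n" for i
  proof (cases "i \<in> s")
    case True
    have "(\<Sum>j\<in>s. ?W i j * c) = (\<Sum>j\<in>s. (if j = i then (1 - \<epsilon>) * c else 0) + (-1 + \<epsilon>) * c)"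
      using cl True unfolding ctln_W_def is_clique_def by (intro sum.cong) (auto simp: algebra_simps)
    also have "\<dots> = (1 - \<epsilon>) * c + real (card s) * ((-1 + \<epsilon>) * c)"
      using True fin by (simp add: sum.distrib)
    finally have "(\<Sum>j\<in>s. ?W i j * c) + \<theta> = c"
      using cD unfolding D_def by (simp add: algebra_simps)
    then show ?thesis using sumeq[of i] True cp unfolding x_def by simp
  next
    case False
    have "\<not> is_target E s i" using tf iN unfolding target_free_def by blast
    then obtain j0 where j0: "j0 \<in> s" "\<not> E j0 i" using False unfolding is_target_def by blast
    have "(\<Sum>j\<in>s. ?W i j * c) \<le> (\<Sum>j\<in>s. (if j = j0 then - (\<epsilon> + \<delta>) * c else 0) + (-1 + \<epsilon>) * c)"
    proof (rule sum_mono)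
      fix j assume j: "j \<in> s"
      then have "i \<noteq> j" using False by auto
      then show "?W i j * c \<le> (if j = j0 then - (\<epsilon> + \<delta>) * c else 0) + (-1 + \<epsilon>) * c"
      proof -
        have "\<delta> * c > 0" "\<epsilon> * c > 0" using cp ep dp by auto
        show ?thesis
        proof (cases "j = j0")
          case True
          then have "?W i j = -1 - \<delta>" using j0 \<open>i \<noteq> j\<close> unfolding ctln_W_def by auto
          then have "?W i j * c = (-1 - \<delta>) * c" by simp
          moreover have "- (\<epsilon> + \<delta>) * c + (-1 + \<epsilon>) * c = (-1 - \<delta>) * c"
            by (simp add: algebra_simps)
          moreover have "(if j = j0 then - (\<epsilon> + \<delta>) * c else 0) = - (\<epsilon> + \<delta>) * c"
            using True by (simp only: simp_thms if_True)
          ultimately show ?thesis by linarith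
        next
          case False
          have "?W i j \<le> -1 + \<epsilon>" using \<open>i \<noteq> j\<close> ep dp unfolding ctln_W_def by auto
          then have "?W i j * c \<le> (-1 + \<epsilon>) * c" using cp by (intro mult_right_mono) auto
          then show ?thesis using False by simp
        qed
      qed
    qed
    also have "\<dots> = - (\<epsilon> + \<delta>) * c + real (card s) * ((-1 + \<epsilon>) * c)"
      using j0 fin by (simp add: sum.distrib)
    finally have "(\<Sum>j\<in>s. ?W i j * c) + \<theta> \<le> - \<delta> * c"
      using cD unfolding D_def by (simp add: algebra_simps)
    moreover have "\<delta> * c > 0" using dp cp by simp
    ultimately show ?thesis using sumeq[of i] False unfolding x_def by simp
  qed
  have "is_fixed_point n ?W \<theta> x"
    unfolding is_fixed_point_def
  proof (intro conjI allI impI)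
    fix i assume "i < n" then show "x i = max 0 ((\<Sum>j<n. ?W i j * x j) + \<theta>)" by (rule fpx)
  next
    fix i show "0 \<le> x i" using cp unfolding x_def by simp
  qed
  moreover have "s = {i. i < n \<and> x i > 0}" using sn cp unfolding x_def by auto
  ultimately show ?thesis by blast
qed

lemma eig_pos:
  assumes cl: "\<forall>i<n. \<forall>j<n. i \<noteq> j \<longrightarrow> E j i"
    and ep: "\<epsilon> > 0" "\<epsilon> < 1"
    and ev: "eigenvalue_of n (I_minus (ctln_W E \<epsilon> \<delta>)) \<mu>"
  shows "Re \<mu> > 0"
proof -
  obtain v where v0: "\<exists>i<n. v i \<noteq> 0"
    and vev: "\<forall>i<n. (\<Sum>j<n. complex_of_real (I_minus (ctln_W E \<epsilon> \<delta>) i j) * v j) = \<mu> * v i"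
    using ev unfolding eigenvalue_of_def by blast
  define s where "s = (\<Sum>j<n. v j)"
  have row: "\<mu> * v i = of_real \<epsilon> * v i + of_real (1 - \<epsilon>) * s" if iN: "i < n" for i
  proof -
    have "(\<Sum>j<n. complex_of_real (I_minus (ctln_W E \<epsilon> \<delta>) i j) * v j)
        = (\<Sum>j<n. (if j = i then of_real \<epsilon> * v j else 0) + of_real (1 - \<epsilon>) * v j)"
    proof (rule sum.cong)
      fix j assume "j \<in> {..<n}"
      then have jN: "j < n" by simp
      show "complex_of_real (I_minus (ctln_W E \<epsilon> \<delta>) i j) * v j
          = (if j = i then of_real \<epsilon> * v j else 0) + of_real (1 - \<epsilon>) * v j"
        using cl iN jN unfolding I_minus_def ctln_W_def
        by (cases "i = j") (auto simp: algebra_simps)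
    qed simp
    also have "\<dots> = of_real \<epsilon> * v i + of_real (1 - \<epsilon>) * s"
      using iN unfolding s_def by (simp add: sum.distrib sum_distrib_left)
    finally show ?thesis using vev iN by simp
  qed
  obtain i0 where i0: "i0 < n" "v i0 \<noteq> 0" using v0 by blast
  show ?thesis
  proof (cases "s = 0")
    case True
    then have "\<mu> * v i0 = of_real \<epsilon> * v i0" using row[OF i0(1)] by simp
    then have "\<mu> = of_real \<epsilon>" using i0(2) by simp
    then show ?thesis using ep by simp
  next
    case False
    have "\<mu> * s = (\<Sum>i<n. \<mu> * v i)" unfolding s_def by (simp add: sum_distrib_left)
    also have "\<dots> = (\<Sum>i<n. of_real \<epsilon> * v i + of_real (1 - \<epsilon>) * s)"
      using row by (intro sum.cong) auto
    also have "\<dots> = (\<Sum>i<n. of_real \<epsilon> * v i) + of_nat n * (of_real (1 - \<epsilon>) * s)"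
      by (simp add: sum.distrib)
    also have "(\<Sum>i<n. of_real \<epsilon> * v i) = of_real \<epsilon> * s"
      unfolding s_def by (simp add: sum_distrib_left)
    also have "of_real \<epsilon> * s + of_nat n * (of_real (1 - \<epsilon>) * s) = (of_real \<epsilon> + of_nat n * of_real (1 - \<epsilon>)) * s"
      by (simp add: algebra_simps)
    finally have "\<mu> = of_real \<epsilon> + of_nat n * of_real (1 - \<epsilon>)" using False by simp
    then have "Re \<mu> = \<epsilon> + real n * (1 - \<epsilon>)" by simp
    moreover have "real n * (1 - \<epsilon>) \<ge> 0" using ep by simp
    ultimately show ?thesis using ep by linarith
  qed
qed



theorem proposition1:
  fixes n :: nat and E :: "nat \<Rightarrow> nat \<Rightarrow> bool" and \<epsilon> \<delta> \<theta> :: real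
  assumes "simple_digraph n E"
    and "directed_clique n E"
    and "legal_params \<epsilon> \<delta>"
    and "\<theta> > 0"
    and "nondegenerate n (ctln_W E \<epsilon> \<delta>) \<theta>"
  shows "(\<exists>\<sigma>. (\<forall>\<tau>. (\<tau> \<subseteq> {0..<n} \<and> is_clique E \<tau> \<and> target_free n E \<tau>) \<longleftrightarrow> \<tau> = \<sigma>)
              \<and> FP n (ctln_W E \<epsilon> \<delta>) \<theta> = {\<sigma>})
         \<and> (stable_motif n (ctln_W E \<epsilon> \<delta>) \<theta> \<longleftrightarrow> is_clique E {0..<n})"
proof -
  have tp: "\<theta> > 0" using assms(4) .
  have dp: "\<delta> > 0" and ep0: "\<epsilon> > 0" and epd: "\<epsilon> < \<delta> / (\<delta> + 1)"
    using assms(3) unfolding legal_params_def by auto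
  have "\<delta> / (\<delta> + 1) < 1" using dp by simp
  then have ep1: "\<epsilon> < 1" using epd by linarith
  obtain p where bp: "bij_betw p {0..<n} {0..<n}" and pe: "\<forall>i<n. \<forall>j<n. i < j \<longrightarrow> E (p i) (p j)"
    using assms(2) unfolding directed_clique_def by blast
  define pos where "pos = the_inv_into {0..<n} p"
  have injp: "inj_on p {0..<n}" and imp: "p ` {0..<n} = {0..<n}" using bp unfolding bij_betw_def by auto
  have posr: "pos u < n" if "u < n" for u
    using the_inv_into_into[OF injp, of u "{0..<n}"] that imp unfolding pos_def by auto
  have ppos: "p (pos u) = u" if "u < n" for u
    using f_the_inv_into_f[OF injp, of u] that imp unfolding pos_def by auto
  have inj: "inj_on pos {0..<n}"
    unfolding inj_on_def by (metis atLeastLessThan_iff ppos)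
  have fwd: "\<forall>u<n. \<forall>v<n. pos u < pos v \<longrightarrow> E u v"
    using pe posr ppos by metis
  obtain \<sigma> where s: "\<sigma> \<subseteq> {0..<n}" "is_clique E \<sigma>" "target_free n E \<sigma>"
    using exists_tfc[OF inj fwd] by blast
  have uniq: "\<forall>\<tau>. (\<tau> \<subseteq> {0..<n} \<and> is_clique E \<tau> \<and> target_free n E \<tau>) \<longleftrightarrow> \<tau> = \<sigma>"
    using unique_tfc[OF _ _ _ s inj fwd] s by blast
  have FPeq: "FP n (ctln_W E \<epsilon> \<delta>) \<theta> = {\<sigma>}"
  proof
    show "{\<sigma>} \<subseteq> FP n (ctln_W E \<epsilon> \<delta>) \<theta>"
      using fp_exists[OF s ep0 ep1 dp tp] unfolding FP_def by auto
  next
    show "FP n (ctln_W E \<epsilon> \<delta>) \<theta> \<subseteq> {\<sigma>}"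
    proof
      fix t assume "t \<in> FP n (ctln_W E \<epsilon> \<delta>) \<theta>"
      then obtain x where fx: "is_fixed_point n (ctln_W E \<epsilon> \<delta>) \<theta> x" and t: "t = {i. i < n \<and> x i > 0}"
        unfolding FP_def by blast
      have "t \<subseteq> {0..<n}" using t by auto
      moreover have "is_clique E t" using fp_clique[OF fx ep0 dp inj fwd] t by simp
      moreover have "target_free n E t" using fp_target_free[OF fx ep0 ep1 dp tp] t by simp
      ultimately show "t \<in> {\<sigma>}" using uniq by blast
    qed
  qed
  have stab: "stable_motif n (ctln_W E \<epsilon> \<delta>) \<theta> \<longleftrightarrow> is_clique E {0..<n}"
  proof
    assume "stable_motif n (ctln_W E \<epsilon> \<delta>) \<theta>"
    then have "{0..<n} \<in> FP n (ctln_W E \<epsilon> \<delta>) \<theta>" unfolding stable_motif_def by blast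
    then have "{0..<n} = \<sigma>" using FPeq by blast
    then show "is_clique E {0..<n}" using s by simp
  next
    assume cl: "is_clique E {0..<n}"
    have "target_free n E {0..<n}" unfolding target_free_def is_target_def by auto
    then have "{0..<n} = \<sigma>" using uniq cl by blast
    then have "{0..<n} \<in> FP n (ctln_W E \<epsilon> \<delta>) \<theta>" using FPeq by blast
    moreover have "\<forall>\<mu>. eigenvalue_of n (I_minus (ctln_W E \<epsilon> \<delta>)) \<mu> \<longrightarrow> Re \<mu> > 0"
    proof (intro allI impI)
      fix \<mu> assume "eigenvalue_of n (I_minus (ctln_W E \<epsilon> \<delta>)) \<mu>"
      moreover have "\<forall>i<n. \<forall>j<n. i \<noteq> j \<longrightarrow> E j i" using cl unfolding is_clique_def by auto
      ultimately show "Re \<mu> > 0" using eig_pos ep0 ep1 by blast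
    qed
    ultimately show "stable_motif n (ctln_W E \<epsilon> \<delta>) \<theta>" unfolding stable_motif_def by blast
  qed
  show ?thesis using uniq FPeq stab by blast
qed

end
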